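(* Every strategyproof and pairwise social choice correspondence satisfies WMON, WSMON, IUA, and WLOC.
   Context: Let $A$ be a finite set of alternatives; a preference profile $R$ assigns a strict total order $\succ_i$ on $A$ (viewed as a set of ordered pairs) to each voter $i$ of a finite non-empty electorate $N\subseteq\{1,2,\dots\}$; $\mathcal{R}^*(A)$ is the set of all profiles over all electorates. $g_R(x,y)=|\{i: x\succ_i y\}|-|\{i: y\succ_i x\}|$. An SCC is $f:\mathcal{R}^*(A)\to 2^A\setminus\{\emptyset\}$; it is pairwise if $f(R)=f(R')$ whenever $g_R=g_{R'}$. Fishburn's extension: for $X\ne Y$, $X\succ_i^F Y$ iff $x\succ_i y$ for all $x\in X\setminus Y,y\in Y$ and for all $x\in X,y\in Y\setminus X$. $f$ is strategyproof if there are no electorate $N$, voter $i\in N$, and profiles $R,R'$ on $N$ with $\succ_j=\succ'_j$ for $j\ne i$ and $f(R')\succ_i^F f(R)$. For $B\subseteq A$, $\succ_i|_B=\succ_i\cap B^2$. In the following, $R,R'$ are profiles on the same electorate $N$ and $i\in N$ with $\succ_j=\succ'_j$ for all $j\ne i$. WMON: for all $a,b\in A$, if $\succ'_i=\succ_i\setminus\{(b,a)\}\cup\{(a,b)\}$ and $a\in f(R)$, then $a\in f(R')$ or $b\in f(R')\setminus f(R)$. WSMON: if $a\notin f(R)$, $\succ_i|_{A\setminus\{a\}}=\succ'_i|_{A\setminus\{a\}}$, $a\succ_i z$ for all $z\ne a$, and $z\succ'_i a$ for all $z\ne a$, then $f(R)=f(R')$. IUA: if there is $B\subseteq A\setminus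 f(R)$ with $\succ_i\setminus\succ_i|_B=\succ'_i\setminus\succ'_i|_B$, then $f(R)=f(R')$. WLOC: if there is $B\subseteq A$ with $\succ_i\setminus\succ_i|_B=\succ'_i\setminus\succ'_i|_B$ and $B\cap f(R)=B\cap f(R')$, then $f(R)=f(R')$. *)

theory Defs
  imports Main
begin

text \<open>Voters: natural numbers >= 1.
A profile on electorate N is represented by a pair (N, R) where R i is the strict
total order of voter i (as a set of ordered pairs) for i in N, and R i = {} for i
outside N (canonical representation).\<close>

definition strict_total_order :: "'a set \<Rightarrow> 'a rel \<Rightarrow> bool" where
  "strict_total_order A r \<longleftrightarrow> r \<subseteq> A \<times> A \<and> irrefl r \<and> trans r \<and> total_on A r"

definition is_profile :: "'a set \<Rightarrow> nat set \<Rightarrow> (nat \<Rightarrow> 'a rel) \<Rightarrow> bool" where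
  "is_profile A N R \<longleftrightarrow> finite N \<and> N \<noteq> {} \<and> 0 \<notin> N \<and>
     (\<forall>i\<in>N. strict_total_order A (R i)) \<and> (\<forall>i. i \<notin> N \<longrightarrow> R i = {})"

definition majority_margin :: "nat set \<Rightarrow> (nat \<Rightarrow> 'a rel) \<Rightarrow> 'a \<Rightarrow> 'a \<Rightarrow> int" where
  "majority_margin N R x y =
     int (card {i\<in>N. (x, y) \<in> R i}) - int (card {i\<in>N. (y, x) \<in> R i})"

definition is_SCC :: "'a set \<Rightarrow> (nat set \<Rightarrow> (nat \<Rightarrow> 'a rel) \<Rightarrow> 'a set) \<Rightarrow> bool" where
  "is_SCC A f \<longleftrightarrow> (\<forall>N R. is_profile A N R \<longrightarrow> f N R \<noteq> {} \<and> f N R \<subseteq> A)"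

definition pairwise_SCC :: "'a set \<Rightarrow> (nat set \<Rightarrow> (nat \<Rightarrow> 'a rel) \<Rightarrow> 'a set) \<Rightarrow> bool" where
  "pairwise_SCC A f \<longleftrightarrow> (\<forall>N R N' R'. is_profile A N R \<longrightarrow> is_profile A N' R' \<longrightarrow>
     majority_margin N R = majority_margin N' R' \<longrightarrow> f N R = f N' R')"

definition fishburn :: "'a rel \<Rightarrow> 'a set \<Rightarrow> 'a set \<Rightarrow> bool" where
  "fishburn r X Y \<longleftrightarrow> X \<noteq> Y \<and> (\<forall>x\<in>X - Y. \<forall>y\<in>Y. (x, y) \<in> r) \<and>
     (\<forall>x\<in>X. \<forall>y\<in>Y - X. (x, y) \<in> r)"

definition i_variant :: "'a set \<Rightarrow> nat set \<Rightarrow> nat \<Rightarrow> (nat \<Rightarrow> 'a rel) \<Rightarrow> (nat \<Rightarrow> 'a rel) \<Rightarrow> bool" where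
  "i_variant A N i R R' \<longleftrightarrow> is_profile A N R \<and> is_profile A N R' \<and> i \<in> N \<and>
     (\<forall>j\<in>N. j \<noteq> i \<longrightarrow> R j = R' j)"

definition strategyproof :: "'a set \<Rightarrow> (nat set \<Rightarrow> (nat \<Rightarrow> 'a rel) \<Rightarrow> 'a set) \<Rightarrow> bool" where
  "strategyproof A f \<longleftrightarrow> \<not> (\<exists>N i R R'. i_variant A N i R R' \<and> fishburn (R i) (f N R') (f N R))"

definition restr :: "'a rel \<Rightarrow> 'a set \<Rightarrow> 'a rel" where
  "restr r B = r \<inter> (B \<times> B)"

definition WMON :: "'a set \<Rightarrow> (nat set \<Rightarrow> (nat \<Rightarrow> 'a rel) \<Rightarrow> 'a set) \<Rightarrow> bool" where
  "WMON A f \<longleftrightarrow> (\<forall>N i R R'. i_variant A N i R R' \<longrightarrow> (\<forall>a\<in>A. \<forall>b\<in>A.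
     R' i = R i - {(b, a)} \<union> {(a, b)} \<and> a \<in> f N R \<longrightarrow>
       a \<in> f N R' \<or> b \<in> f N R' - f N R))"

definition WSMON :: "'a set \<Rightarrow> (nat set \<Rightarrow> (nat \<Rightarrow> 'a rel) \<Rightarrow> 'a set) \<Rightarrow> bool" where
  "WSMON A f \<longleftrightarrow> (\<forall>N i R R'. i_variant A N i R R' \<longrightarrow> (\<forall>a\<in>A.
     a \<notin> f N R \<and> restr (R i) (A - {a}) = restr (R' i) (A - {a}) \<and>
     (\<forall>z\<in>A. z \<noteq> a \<longrightarrow> (a, z) \<in> R i) \<and> (\<forall>z\<in>A. z \<noteq> a \<longrightarrow> (z, a) \<in> R' i) \<longrightarrow>
       f N R = f N R'))"

definition IUA :: "'a set \<Rightarrow> (nat set \<Rightarrow> (nat \<Rightarrow> 'a rel) \<Rightarrow> 'a set) \<Rightarrow> bool" where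
  "IUA A f \<longleftrightarrow> (\<forall>N i R R'. i_variant A N i R R' \<longrightarrow>
     (\<exists>B. B \<subseteq> A - f N R \<and> R i - restr (R i) B = R' i - restr (R' i) B) \<longrightarrow>
       f N R = f N R')"

definition WLOC :: "'a set \<Rightarrow> (nat set \<Rightarrow> (nat \<Rightarrow> 'a rel) \<Rightarrow> 'a set) \<Rightarrow> bool" where
  "WLOC A f \<longleftrightarrow> (\<forall>N i R R'. i_variant A N i R R' \<longrightarrow>
     (\<exists>B. B \<subseteq> A \<and> R i - restr (R i) B = R' i - restr (R' i) B \<and> B \<inter> f N R = B \<inter> f N R') \<longrightarrow>
       f N R = f N R')"

end

theory Submission
  imports Defs
begin

definition dd :: "'a rel \<Rightarrow> 'a \<Rightarrow> 'a \<Rightarrow> int" where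
  "dd r x y = of_bool ((x,y)\<in>r) - of_bool ((y,x)\<in>r)"

lemma margin_sum: "finite N \<Longrightarrow> majority_margin N R x y = (\<Sum>l\<in>N. dd (R l) x y)"
proof -
  assume fin: "finite N"
  have "(\<Sum>l\<in>N. dd (R l) x y) = (\<Sum>l\<in>N. of_bool ((x,y)\<in>R l)) - (\<Sum>l\<in>N. (of_bool ((y,x)\<in>R l)::int))"
    by (simp add: dd_def sum_subtractf)
  also have "\<dots> = majority_margin N R x y"
    using fin by (simp add: majority_margin_def Int_def conj_commute)
  finally show ?thesis by simp
qed

definition lexo :: "'a set \<Rightarrow> ('a \<Rightarrow> nat) \<Rightarrow> 'a rel \<Rightarrow> 'a rel" where
  "lexo A g T = {(x,y). x\<in>A \<and> y\<in>A \<and> (g x < g y \<or> (g x = g y \<and> (x,y)\<in>T))}"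

lemma lexo_sto: "strict_total_order A T \<Longrightarrow> strict_total_order A (lexo A g T)"
  unfolding strict_total_order_def lexo_def irrefl_def trans_def total_on_def
  apply (intro conjI)
     apply blast
    apply blast
   apply (clarsimp; metis less_trans)
  apply (clarsimp; metis linorder_neqE_nat)
  done

lemma lexo_diff:
  assumes "strict_total_order A r" "strict_total_order A r'" "r' - r \<subseteq> B \<times> B"
    "\<forall>x\<in>B. \<forall>y\<in>B. g x = g y"
  shows "lexo A g r' - lexo A g r = r' - r"
  using assms unfolding strict_total_order_def lexo_def by fastforce

lemma converse_sto: "strict_total_order A T \<Longrightarrow> strict_total_order A (T\<inverse>)"
  unfolding strict_total_order_def irrefl_def trans_def total_on_def by blast

lemma sto_asym: "strict_total_order A T \<Longrightarrow> (x,y) \<in> T \<Longrightarrow> (y,x) \<notin> T"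
  unfolding strict_total_order_def irrefl_def trans_def by blast

lemma dd_conv: "dd (T\<inverse>) x y = - dd T x y"
  by (simp add: dd_def)

lemma key:
  assumes scc: "is_SCC A f" and sp: "strategyproof A f" and pw: "pairwise_SCC A f"
    and iv: "i_variant A N i R R'"
    and Q: "strict_total_order A Q" and Q': "strict_total_order A Q'"
    and d1: "Q' - Q = R' i - R i" and d2: "Q - Q' = R i - R' i"
  shows "\<not> fishburn Q' (f N R) (f N R')"
proof
  assume fb: "fishburn Q' (f N R) (f N R')"
  have pR: "is_profile A N R" and pR': "is_profile A N R'" and iN: "i \<in> N"
    and eq: "\<forall>l\<in>N. l \<noteq> i \<longrightarrow> R l = R' l"
    using iv unfolding i_variant_def by auto
  have finN: "finite N" and neN: "N \<noteq> {}" and zN: "0 \<notin> N"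
    using pR unfolding is_profile_def by auto
  define j where "j = Max N + 1"
  define k where "k = Max N + 2"
  have jN: "j \<notin> N" and kN: "k \<notin> N"
    using Max_ge[OF finN] unfolding j_def k_def by fastforce+
  have jk: "j \<noteq> k" "j \<noteq> 0" "k \<noteq> 0" unfolding j_def k_def by auto
  define N2 where "N2 = insert j (insert k N)"
  define T where "T = (\<lambda>l. if l = j then Q else if l = k then Q\<inverse> else R l)"
  define T' where "T' = T(j := Q')"
  have pT: "is_profile A N2 T"
    using pR Q converse_sto[OF Q] jk unfolding is_profile_def N2_def T_def by auto
  have pT': "is_profile A N2 T'"
    using pR Q' converse_sto[OF Q] jk unfolding is_profile_def N2_def T'_def T_def by auto
  have ivT: "i_variant A N2 j T' T"
    using pT pT' unfolding i_variant_def N2_def T'_def by auto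
  have "\<not> fishburn (T' j) (f N2 T) (f N2 T')"
    using sp ivT unfolding strategyproof_def by blast
  hence nfb: "\<not> fishburn Q' (f N2 T) (f N2 T')" unfolding T'_def by simp
  have sumT: "(\<Sum>l\<in>N2. dd (T l) x y) = dd Q x y - dd Q x y + (\<Sum>l\<in>N. dd (R l) x y)" for x y
  proof -
    have "(\<Sum>l\<in>N2. dd (T l) x y) = dd (T j) x y + dd (T k) x y + (\<Sum>l\<in>N. dd (T l) x y)"
      unfolding N2_def using finN jN kN jk by (simp add: add.assoc)
    also have "(\<Sum>l\<in>N. dd (T l) x y) = (\<Sum>l\<in>N. dd (R l) x y)"
      using jN kN unfolding T_def by (intro sum.cong) auto
    finally show ?thesis using jk by (simp add: T_def dd_conv)
  qed
  have sumT': "(\<Sum>l\<in>N2. dd (T' l) x y) = dd Q' x y - dd Q x y + (\<Sum>l\<in>N. dd (R l) x y)" for x y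
  proof -
    have "(\<Sum>l\<in>N2. dd (T' l) x y) = dd (T' j) x y + dd (T' k) x y + (\<Sum>l\<in>N. dd (T' l) x y)"
      unfolding N2_def using finN jN kN jk by (simp add: add.assoc)
    also have "(\<Sum>l\<in>N. dd (T' l) x y) = (\<Sum>l\<in>N. dd (R l) x y)"
      using jN kN unfolding T'_def T_def by (intro sum.cong) auto
    finally show ?thesis using jk by (simp add: T'_def T_def dd_conv)
  qed
  have sumR': "(\<Sum>l\<in>N. dd (R' l) x y) = dd (R' i) x y - dd (R i) x y + (\<Sum>l\<in>N. dd (R l) x y)" for x y
  proof -
    have "(\<Sum>l\<in>N. dd (R' l) x y) = dd (R' i) x y + (\<Sum>l\<in>N-{i}. dd (R' l) x y)"
      using finN iN by (simp add: sum.remove)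
    also have "(\<Sum>l\<in>N-{i}. dd (R' l) x y) = (\<Sum>l\<in>N-{i}. dd (R l) x y)"
      using eq by (intro sum.cong) auto
    also have "(\<Sum>l\<in>N. dd (R l) x y) = dd (R i) x y + (\<Sum>l\<in>N-{i}. dd (R l) x y)"
      using finN iN by (simp add: sum.remove)
    ultimately show ?thesis by simp
  qed
  have ind: "of_bool ((x,y)\<in>Q') - of_bool ((x,y)\<in>Q) = (of_bool ((x,y)\<in>R' i) - of_bool ((x,y)\<in>R i) :: int)" for x y
  proof -
    have "(x,y) \<in> Q' - Q \<longleftrightarrow> (x,y) \<in> R' i - R i" "(x,y) \<in> Q - Q' \<longleftrightarrow> (x,y) \<in> R i - R' i"
      using d1 d2 by auto
    thus ?thesis by (cases "(x,y)\<in>Q'"; cases "(x,y)\<in>Q"; cases "(x,y)\<in>R' i"; cases "(x,y)\<in>R i") auto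
  qed
  have ddeq: "dd Q' x y - dd Q x y = dd (R' i) x y - dd (R i) x y" for x y
    using ind[of x y] ind[of y x] unfolding dd_def by linarith
  have finN2: "finite N2" unfolding N2_def using finN by simp
  have m1: "majority_margin N2 T = majority_margin N R"
    by (intro ext) (simp add: margin_sum[OF finN2] margin_sum[OF finN] sumT)
  have m2: "majority_margin N2 T' = majority_margin N R'"
    by (intro ext) (simp add: margin_sum[OF finN2] margin_sum[OF finN] sumT' sumR' ddeq)
  have "f N2 T = f N R" using pw pT pR m1 unfolding pairwise_SCC_def by blast
  moreover have "f N2 T' = f N R'" using pw pT' pR' m2 unfolding pairwise_SCC_def by blast
  ultimately show False using nfb fb by simp
qed

lemma loc_common:
  assumes scc: "is_SCC A f" and sp: "strategyproof A f" and pw: "pairwise_SCC A f"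
    and iv: "i_variant A N i R R'"
    and BA: "B \<subseteq> A"
    and rB: "R i - restr (R i) B = R' i - restr (R' i) B"
    and BX: "B \<inter> f N R = {} \<or> B \<inter> f N R = B \<inter> f N R'"
  shows "f N R = f N R'"
proof (rule ccontr)
  assume ne: "f N R \<noteq> f N R'"
  define X where "X = f N R"
  define Y where "Y = f N R'"
  have pR: "is_profile A N R" and pR': "is_profile A N R'" and iN: "i \<in> N"
    using iv unfolding i_variant_def by auto
  have XA: "X \<subseteq> A" and YA: "Y \<subseteq> A"
    using scc pR pR' unfolding is_SCC_def X_def Y_def by auto
  have r: "strict_total_order A (R i)" and r': "strict_total_order A (R' i)"
    using pR pR' iN unfolding is_profile_def by auto
  have s1: "R' i - R i \<subseteq> B \<times> B" and s2: "R i - R' i \<subseteq> B \<times> B"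
    using rB unfolding restr_def by blast+
  define g where "g = (\<lambda>x. if x \<in> B then 2 else if x \<in> X - Y then 0 else if x \<in> X then 1
     else if x \<in> Y then 3 else (4::nat))"
  have gB: "\<forall>x\<in>B. \<forall>y\<in>B. g x = g y" unfolding g_def by auto
  define Q where "Q = lexo A g (R i)"
  define Q' where "Q' = lexo A g (R' i)"
  have Qs: "strict_total_order A Q" "strict_total_order A Q'"
    unfolding Q_def Q'_def using lexo_sto r r' by auto
  have d1: "Q' - Q = R' i - R i" unfolding Q_def Q'_def using lexo_diff[OF r r' s1 gB] .
  have d2: "Q - Q' = R i - R' i" unfolding Q_def Q'_def using lexo_diff[OF r' r s2 gB] .
  have "\<not> fishburn Q' (f N R) (f N R')" using key[OF scc sp pw iv Qs d1 d2] .
  moreover have "fishburn Q' X Y"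
    unfolding fishburn_def
  proof (intro conjI ballI)
    show "X \<noteq> Y" using ne X_def Y_def by simp
  next
    fix x y assume x: "x \<in> X - Y" and y: "y \<in> Y"
    have "x \<notin> B" using BX x unfolding X_def Y_def by blast
    hence "g x < g y" using x y unfolding g_def by auto
    thus "(x, y) \<in> Q'" using x y XA YA unfolding Q'_def lexo_def by auto
  next
    fix x y assume x: "x \<in> X" and y: "y \<in> Y - X"
    have "g x < g y"
    proof (cases "y \<in> B")
      case True
      then have "B \<inter> X = {}" using BX y unfolding X_def Y_def by blast
      then show ?thesis using x y True unfolding g_def by auto
    next
      case False
      then show ?thesis using x y unfolding g_def by auto
    qed
    thus "(x, y) \<in> Q'" using x y XA YA unfolding Q'_def lexo_def by auto
  qed
  ultimately show False unfolding X_def Y_def by simp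
qed

lemma wmon_part:
  assumes scc: "is_SCC A f" and sp: "strategyproof A f" and pw: "pairwise_SCC A f"
    and iv: "i_variant A N i R R'"
    and aA: "a \<in> A" and bA: "b \<in> A"
    and Ri: "R' i = R i - {(b, a)} \<union> {(a, b)}" and aX: "a \<in> f N R"
  shows "a \<in> f N R' \<or> b \<in> f N R' - f N R"
proof (rule ccontr)
  assume H: "\<not> (a \<in> f N R' \<or> b \<in> f N R' - f N R)"
  define X where "X = f N R"
  define Y where "Y = f N R'"
  have pR: "is_profile A N R" and pR': "is_profile A N R'" and iN: "i \<in> N"
    and eq: "\<forall>l\<in>N. l \<noteq> i \<longrightarrow> R l = R' l"
    using iv unfolding i_variant_def by auto
  have XA: "X \<subseteq> A" and YA: "Y \<subseteq> A"
    using scc pR pR' unfolding is_SCC_def X_def Y_def by auto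
  have r: "strict_total_order A (R i)" and r': "strict_total_order A (R' i)"
    using pR pR' iN unfolding is_profile_def by auto
  have ab: "a \<noteq> b"
  proof
    assume "a = b"
    then have "(a,a) \<in> R' i" using Ri by simp
    then show False using r' unfolding strict_total_order_def irrefl_def by blast
  qed
  have ba: "(b,a) \<in> R i"
  proof (rule ccontr)
    assume nba: "(b,a) \<notin> R i"
    then have "(a,b) \<in> R i" using r aA bA ab unfolding strict_total_order_def total_on_def by blast
    then have "R' i = R i" using Ri nba by auto
    then have "R' = R" using eq pR pR' unfolding is_profile_def by (metis ext)
    then show False using H aX by simp
  qed
  have nab: "(a,b) \<notin> R i" using sto_asym[OF r ba] .
  have s1: "R' i - R i \<subseteq> {a,b} \<times> {a,b}" and s2: "R i - R' i \<subseteq> {a,b} \<times> {a,b}"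
    using Ri by auto
  define g where "g = (\<lambda>x. if x \<in> {a,b} then 1 else if x \<in> X - Y then 0 else if x \<in> X then 2
     else if x \<in> Y then 3 else (4::nat))"
  have gB: "\<forall>x\<in>{a,b}. \<forall>y\<in>{a,b}. g x = g y" unfolding g_def by auto
  define Q where "Q = lexo A g (R i)"
  define Q' where "Q' = lexo A g (R' i)"
  have Qs: "strict_total_order A Q" "strict_total_order A Q'"
    unfolding Q_def Q'_def using lexo_sto r r' by auto
  have d1: "Q' - Q = R' i - R i" unfolding Q_def Q'_def using lexo_diff[OF r r' s1 gB] .
  have d2: "Q - Q' = R i - R' i" unfolding Q_def Q'_def using lexo_diff[OF r' r s2 gB] .
  have "\<not> fishburn Q' (f N R) (f N R')" using key[OF scc sp pw iv Qs d1 d2] .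
  moreover have "fishburn Q' X Y"
    unfolding fishburn_def
  proof (intro conjI ballI)
    show "X \<noteq> Y" using H aX X_def Y_def by auto
  next
    fix x y assume x: "x \<in> X - Y" and y: "y \<in> Y"
    have aY: "a \<notin> Y" using H Y_def by simp
    show "(x, y) \<in> Q'"
    proof (cases "x = a \<and> y = b")
      case True
      then show ?thesis using Ri aA bA unfolding Q'_def lexo_def g_def by auto
    next
      case False
      then have "g x < g y" using x y aY unfolding g_def by auto
      thus ?thesis using x y XA YA unfolding Q'_def lexo_def by auto
    qed
  next
    fix x y assume x: "x \<in> X" and y: "y \<in> Y - X"
    have "y \<noteq> a" "y \<noteq> b" using H y X_def Y_def by auto
    then have "g x < g y" using x y unfolding g_def by auto
    thus "(x, y) \<in> Q'" using x y XA YA unfolding Q'_def lexo_def by auto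
  qed
  ultimately show False unfolding X_def Y_def by simp
qed

lemma wsmon_part:
  assumes scc: "is_SCC A f" and sp: "strategyproof A f" and pw: "pairwise_SCC A f"
    and iv: "i_variant A N i R R'"
    and aA: "a \<in> A" and aX: "a \<notin> f N R"
    and rr: "restr (R i) (A - {a}) = restr (R' i) (A - {a})"
    and top: "\<forall>z\<in>A. z \<noteq> a \<longrightarrow> (a, z) \<in> R i"
    and bot: "\<forall>z\<in>A. z \<noteq> a \<longrightarrow> (z, a) \<in> R' i"
  shows "f N R = f N R'"
proof (rule ccontr)
  assume ne: "f N R \<noteq> f N R'"
  define X where "X = f N R"
  define Y where "Y = f N R'"
  have pR: "is_profile A N R" and pR': "is_profile A N R'" and iN: "i \<in> N"
    using iv unfolding i_variant_def by auto
  have XA: "X \<subseteq> A" and YA: "Y \<subseteq> A"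
    using scc pR pR' unfolding is_SCC_def X_def Y_def by auto
  have r: "strict_total_order A (R i)" and r': "strict_total_order A (R' i)"
    using pR pR' iN unfolding is_profile_def by auto
  have same: "x \<noteq> a \<Longrightarrow> y \<noteq> a \<Longrightarrow> (x,y) \<in> R i \<longleftrightarrow> (x,y) \<in> R' i" for x y
  proof -
    assume "x \<noteq> a" "y \<noteq> a"
    moreover have "R i \<subseteq> A \<times> A" "R' i \<subseteq> A \<times> A" using r r' unfolding strict_total_order_def by auto
    ultimately show ?thesis using rr unfolding restr_def by blast
  qed
  have RR1: "R' i - R i = {(x,a) | x. x \<in> A \<and> x \<noteq> a}"
  proof -
    have "(x,y) \<in> R' i - R i \<longleftrightarrow> x \<in> A \<and> x \<noteq> a \<and> y = a" for x y
    proof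
      assume h: "(x,y) \<in> R' i - R i"
      have xy: "x \<in> A" "y \<in> A" using h r' unfolding strict_total_order_def by auto
      show "x \<in> A \<and> x \<noteq> a \<and> y = a"
      proof (cases "x = a")
        case True
        have "(a,a) \<notin> R' i" using r' unfolding strict_total_order_def irrefl_def by blast
        then show ?thesis using h xy bot sto_asym[OF r'] True by (cases "y = a") auto
      next
        case False
        then show ?thesis using h same xy by blast
      qed
    next
      assume "x \<in> A \<and> x \<noteq> a \<and> y = a"
      then show "(x,y) \<in> R' i - R i" using bot top sto_asym[OF r] by blast
    qed
    then show ?thesis by auto
  qed
  have RR2: "R i - R' i = {(a,x) | x. x \<in> A \<and> x \<noteq> a}"
  proof -
    have "(x,y) \<in> R i - R' i \<longleftrightarrow> y \<in> A \<and> y \<noteq> a \<and> x = a" for x y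
    proof
      assume h: "(x,y) \<in> R i - R' i"
      have xy: "x \<in> A" "y \<in> A" using h r unfolding strict_total_order_def by auto
      show "y \<in> A \<and> y \<noteq> a \<and> x = a"
      proof (cases "y = a")
        case True
        have "(a,a) \<notin> R i" using r unfolding strict_total_order_def irrefl_def by blast
        then show ?thesis using h xy top sto_asym[OF r] True by (cases "x = a") auto
      next
        case False
        then show ?thesis using h same xy by blast
      qed
    next
      assume "y \<in> A \<and> y \<noteq> a \<and> x = a"
      then show "(x,y) \<in> R i - R' i" using bot top sto_asym[OF r'] by blast
    qed
    then show ?thesis by auto
  qed
  define g where "g = (\<lambda>x. if x = a then 0 else if x \<in> X - Y then 1 else if x \<in> X then 2
     else (3::nat))"
  define g' where "g' = (\<lambda>x. if x = a then 4 else if x \<in> X - Y then 1 else if x \<in> X then 2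
     else (3::nat))"
  define Q where "Q = lexo A g (R i)"
  define Q' where "Q' = lexo A g' (R i)"
  have Qs: "strict_total_order A Q" "strict_total_order A Q'"
    unfolding Q_def Q'_def using lexo_sto r by auto
  have irr: "(x,x) \<notin> R i" for x using r unfolding strict_total_order_def irrefl_def by auto
  have gg: "x \<noteq> a \<Longrightarrow> g x = g' x" "x \<noteq> a \<Longrightarrow> g x \<ge> 1" "x \<noteq> a \<Longrightarrow> g' x \<le> 3" for x
    unfolding g_def g'_def by auto
  have ga: "g a = 0" "g' a = 4" unfolding g_def g'_def by auto
  have m1: "(x,y) \<in> Q' - Q \<longleftrightarrow> x \<in> A \<and> x \<noteq> a \<and> y = a" for x y
  proof (cases "x = a")
    case True
    then show ?thesis unfolding Q_def Q'_def lexo_def using gg[of y] ga irr[of a] by (cases "y = a") auto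
  next
    case xa: False
    show ?thesis
    proof (cases "y = a")
      case True
      then show ?thesis unfolding Q_def Q'_def lexo_def using gg[of x] ga xa aA by auto
    next
      case False
      then show ?thesis unfolding Q_def Q'_def lexo_def using gg(1)[of x] gg(1)[of y] xa by auto
    qed
  qed
  have m2: "(x,y) \<in> Q - Q' \<longleftrightarrow> y \<in> A \<and> y \<noteq> a \<and> x = a" for x y
  proof (cases "x = a")
    case True
    then show ?thesis unfolding Q_def Q'_def lexo_def using gg[of y] ga irr[of a] aA by (cases "y = a") auto
  next
    case xa: False
    show ?thesis
    proof (cases "y = a")
      case True
      then show ?thesis unfolding Q_def Q'_def lexo_def using gg[of x] ga xa aA by auto
    next
      case False
      then show ?thesis unfolding Q_def Q'_def lexo_def using gg(1)[of x] gg(1)[of y] xa by auto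
    qed
  qed
  have d1: "Q' - Q = R' i - R i" unfolding RR1 using m1 by auto
  have d2: "Q - Q' = R i - R' i" unfolding RR2 using m2 by auto
  have "\<not> fishburn Q' (f N R) (f N R')" using key[OF scc sp pw iv Qs d1 d2] .
  moreover have "fishburn Q' X Y"
    unfolding fishburn_def
  proof (intro conjI ballI)
    show "X \<noteq> Y" using ne X_def Y_def by auto
  next
    fix x y assume x: "x \<in> X - Y" and y: "y \<in> Y"
    have "x \<noteq> a" using aX x X_def by auto
    then have "g' x < g' y" using x y unfolding g'_def by auto
    thus "(x, y) \<in> Q'" using x y XA YA unfolding Q'_def lexo_def by auto
  next
    fix x y assume x: "x \<in> X" and y: "y \<in> Y - X"
    have "x \<noteq> a" using aX x X_def by auto
    then have "g' x < g' y" using x y unfolding g'_def by auto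
    thus "(x, y) \<in> Q'" using x y XA YA unfolding Q'_def lexo_def by auto
  qed
  ultimately show False unfolding X_def Y_def by simp
qed

theorem lemma4:
  fixes A :: "'a set" and f :: "nat set \<Rightarrow> (nat \<Rightarrow> 'a rel) \<Rightarrow> 'a set"
  assumes "finite A" and "is_SCC A f" and "strategyproof A f" and "pairwise_SCC A f"
  shows "WMON A f \<and> WSMON A f \<and> IUA A f \<and> WLOC A f"
proof (intro conjI)
  show "WMON A f" unfolding WMON_def
  proof (intro allI impI ballI)
    fix N i R R' a b assume iv: "i_variant A N i R R'" and a: "a \<in> A" and b: "b \<in> A"
      and h: "R' i = R i - {(b, a)} \<union> {(a, b)} \<and> a \<in> f N R"
    show "a \<in> f N R' \<or> b \<in> f N R' - f N R"
      using wmon_part[OF assms(2-4) iv a b conjunct1[OF h] conjunct2[OF h]] .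
  qed
  show "WSMON A f" unfolding WSMON_def
  proof (intro allI impI ballI)
    fix N i R R' a assume iv: "i_variant A N i R R'" and a: "a \<in> A"
      and h: "a \<notin> f N R \<and> restr (R i) (A - {a}) = restr (R' i) (A - {a}) \<and>
     (\<forall>z\<in>A. z \<noteq> a \<longrightarrow> (a, z) \<in> R i) \<and> (\<forall>z\<in>A. z \<noteq> a \<longrightarrow> (z, a) \<in> R' i)"
    from h have h1: "a \<notin> f N R" and h2: "restr (R i) (A - {a}) = restr (R' i) (A - {a})"
      and h3: "\<forall>z\<in>A. z \<noteq> a \<longrightarrow> (a, z) \<in> R i" and h4: "\<forall>z\<in>A. z \<noteq> a \<longrightarrow> (z, a) \<in> R' i"
      by simp_all
    show "f N R = f N R'"
      using wsmon_part[OF assms(2-4) iv a h1 h2 h3 h4] .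
  qed
  show "IUA A f" unfolding IUA_def
  proof (intro allI impI)
    fix N i R R' assume iv: "i_variant A N i R R'"
      and "\<exists>B. B \<subseteq> A - f N R \<and> R i - restr (R i) B = R' i - restr (R' i) B"
    then obtain B where B: "B \<subseteq> A - f N R" "R i - restr (R i) B = R' i - restr (R' i) B" by blast
    show "f N R = f N R'"
      using loc_common[OF assms(2-4) iv _ B(2)] B(1) by blast
  qed
  show "WLOC A f" unfolding WLOC_def
  proof (intro allI impI)
    fix N i R R' assume iv: "i_variant A N i R R'"
      and "\<exists>B. B \<subseteq> A \<and> R i - restr (R i) B = R' i - restr (R' i) B \<and> B \<inter> f N R = B \<inter> f N R'"
    then obtain B where B: "B \<subseteq> A" "R i - restr (R i) B = R' i - restr (R' i) B"
      "B \<inter> f N R = B \<inter> f N R'" by blast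
    show "f N R = f N R'"
      using loc_common[OF assms(2-4) iv B(1) B(2)] B(3) by blast
  qed
qed

end
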